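(* Let $G$ be a group of homeomorphisms of a topological space $X$ acting effectively, such that the topology of pointwise convergence $\tau_p$ is an admissible group topology on $G$. If $(G,\tau_\partial)$ is Roelcke precompact, then $(G,\tau_p)$ is Roelcke precompact. If $(G,\tau_p)$ is not Roelcke precompact, then $G$ is not Roelcke precompact in any admissible group topology.
   Context: Admissible group topology: $G$ is a topological group and the action $G\times X\to X$ is continuous. $\tau_p$: subbase $\{f\in G\mid f(x)\in O\}$, $x\in X$, $O$ open. $\tau_\partial$ (permutation topology): group topology whose identity neighbourhood subbase is formed by point stabilizers $\mathrm{St}_x=\{g\in G\mid g(x)=x\}$. Roelcke precompact: the Roelcke uniformity (greatest lower bound of left and right uniformities) is totally bounded. *)

theory Defs
  imports "HOL-Analysis.Analysis"
begin

text \<open>Elements are maps 'a => 'a which are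
  homeomorphisms of X and equal to the identity outside the carrier of X (so that the
  group identity is id and the group operation is composition).\<close>

definition hinv :: "'a topology \<Rightarrow> ('a \<Rightarrow> 'a) \<Rightarrow> ('a \<Rightarrow> 'a)" where
  "hinv X g = (\<lambda>x. if x \<in> topspace X then inv_into (topspace X) g x else x)"

definition homeo_group :: "'a topology \<Rightarrow> ('a \<Rightarrow> 'a) set \<Rightarrow> bool" where
  "homeo_group X G \<longleftrightarrow>
     (\<forall>g\<in>G. homeomorphic_map X X g \<and> (\<forall>x. x \<notin> topspace X \<longrightarrow> g x = x)) \<and>
     id \<in> G \<and> (\<forall>f\<in>G. \<forall>g\<in>G. f \<circ> g \<in> G) \<and> (\<forall>g\<in>G. hinv X g \<in> G)"

definition acts_effectively :: "'a topology \<Rightarrow> ('a \<Rightarrow> 'a) set \<Rightarrow> bool" where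
  "acts_effectively X G \<longleftrightarrow> (\<forall>g\<in>G. (\<forall>x\<in>topspace X. g x = x) \<longrightarrow> g = id)"

definition group_topology ::
    "'a topology \<Rightarrow> ('a \<Rightarrow> 'a) set \<Rightarrow> ('a \<Rightarrow> 'a) topology \<Rightarrow> bool" where
  "group_topology X G T \<longleftrightarrow> topspace T = G \<and>
     continuous_map (prod_topology T T) T (\<lambda>(f, g). f \<circ> g) \<and>
     continuous_map T T (hinv X)"

definition admissible ::
    "'a topology \<Rightarrow> ('a \<Rightarrow> 'a) set \<Rightarrow> ('a \<Rightarrow> 'a) topology \<Rightarrow> bool" where
  "admissible X G T \<longleftrightarrow> group_topology X G T \<and>
     continuous_map (prod_topology T X) X (\<lambda>(g, x). g x)"

definition tau_p :: "'a topology \<Rightarrow> ('a \<Rightarrow> 'a) set \<Rightarrow> ('a \<Rightarrow> 'a) topology" where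
  "tau_p X G = subtopology
     (topology_generated_by {{f \<in> G. f x \<in> V} | x V. x \<in> topspace X \<and> openin X V}) G"

text \<open>Permutation topology: the group topology whose identity neighbourhood subbase
  consists of the point stabilizers; U is open iff every g in U has a translate
  g St_F inside U, St_F the pointwise stabilizer of a finite set F.\<close>
definition stab :: "'a topology \<Rightarrow> ('a \<Rightarrow> 'a) set \<Rightarrow> 'a set \<Rightarrow> ('a \<Rightarrow> 'a) set" where
  "stab X G F = {h \<in> G. \<forall>x\<in>F. h x = x}"

definition tau_partial :: "'a topology \<Rightarrow> ('a \<Rightarrow> 'a) set \<Rightarrow> ('a \<Rightarrow> 'a) topology" where
  "tau_partial X G = topology (\<lambda>U. U \<subseteq> G \<and>
     (\<forall>g\<in>U. \<exists>F. finite F \<and> F \<subseteq> topspace X \<and> (\<lambda>h. g \<circ> h) ` stab X G F \<subseteq> U))"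

text \<open>Roelcke uniformity: generated by the entourages {(g,h). h in U g U}, U an
  identity neighbourhood (it suffices to take open U containing the identity).\<close>
definition roelcke_entourage ::
    "('a \<Rightarrow> 'a) set \<Rightarrow> ('a \<Rightarrow> 'a) set \<Rightarrow> (('a \<Rightarrow> 'a) \<times> ('a \<Rightarrow> 'a)) set" where
  "roelcke_entourage G U = {(g, h). g \<in> G \<and> h \<in> G \<and>
     (\<exists>u\<in>U. \<exists>v\<in>U. h = u \<circ> g \<circ> v)}"

definition roelcke_precompact :: "('a \<Rightarrow> 'a) set \<Rightarrow> ('a \<Rightarrow> 'a) topology \<Rightarrow> bool" where
  "roelcke_precompact G T \<longleftrightarrow>
     (\<forall>U. openin T U \<and> id \<in> U \<longrightarrow>
        (\<exists>F. finite F \<and> F \<subseteq> G \<and> G \<subseteq> (\<Union>f\<in>F. roelcke_entourage G U `` {f})))"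

end

theory Submission
  imports Defs
begin

lemma gen_open:
  assumes "generate_topology_on S W"
    and "\<And>s. s \<in> S \<Longrightarrow> openin T (s \<inter> G)"
  shows "openin T (W \<inter> G)"
  using assms(1)
proof induction
  case Empty then show ?case by simp
next
  case (Int a b)
  have "a \<inter> b \<inter> G = (a \<inter> G) \<inter> (b \<inter> G)" by blast
  moreover have "openin T (a \<inter> G \<inter> (b \<inter> G))" using Int.IH by (rule openin_Int)
  ultimately show ?case by simp
next
  case (UN K)
  have "\<Union>K \<inter> G = (\<Union>k\<in>K. k \<inter> G)" by blast
  moreover have "openin T (\<Union>k\<in>K. k \<inter> G)" using UN.IH by (intro openin_Union) blast
  ultimately show ?case by simp
next
  case (Basis s) then show ?case using assms(2) by blast
qed

lemma tau_p_open:
  assumes "openin (tau_p X G) U"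
    and "\<And>x V. x \<in> topspace X \<Longrightarrow> openin X V \<Longrightarrow> openin T {f \<in> G. f x \<in> V}"
  shows "openin T U"
proof -
  from assms(1) obtain W where W: "openin (topology_generated_by
      {{f \<in> G. f x \<in> V} | x V. x \<in> topspace X \<and> openin X V}) W" "U = W \<inter> G"
    unfolding tau_p_def openin_subtopology by blast
  have "openin T (W \<inter> G)"
  proof (rule gen_open[OF openin_topology_generated_by[OF W(1)]])
    fix s assume "s \<in> {{f \<in> G. f x \<in> V} | x V. x \<in> topspace X \<and> openin X V}"
    then obtain x V where xV: "x \<in> topspace X" "openin X V" "s = {f \<in> G. f x \<in> V}" by blast
    then have "s \<inter> G = {f \<in> G. f x \<in> V}" by blast
    then show "openin T (s \<inter> G)" using assms(2)[OF xV(1,2)] by simp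
  qed
  then show ?thesis using W by simp
qed

lemma rp_mono:
  assumes "roelcke_precompact G T"
    and "\<And>U. openin (tau_p X G) U \<Longrightarrow> openin T U"
  shows "roelcke_precompact G (tau_p X G)"
  using assms unfolding roelcke_precompact_def by blast

lemma openin_tau_partial:
  assumes "homeo_group X G"
  shows "openin (tau_partial X G) U \<longleftrightarrow> U \<subseteq> G \<and>
     (\<forall>g\<in>U. \<exists>F. finite F \<and> F \<subseteq> topspace X \<and> (\<lambda>h. g \<circ> h) ` stab X G F \<subseteq> U)"
proof -
  have "istopology (\<lambda>U. U \<subseteq> G \<and>
     (\<forall>g\<in>U. \<exists>F. finite F \<and> F \<subseteq> topspace X \<and> (\<lambda>h. g \<circ> h) ` stab X G F \<subseteq> U))"
    unfolding istopology_def
  proof (rule conjI; intro allI impI)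
    fix S T :: "('a \<Rightarrow> 'a) set"
    assume S: "S \<subseteq> G \<and> (\<forall>g\<in>S. \<exists>F. finite F \<and> F \<subseteq> topspace X \<and> (\<lambda>h. g \<circ> h) ` stab X G F \<subseteq> S)"
      and T: "T \<subseteq> G \<and> (\<forall>g\<in>T. \<exists>F. finite F \<and> F \<subseteq> topspace X \<and> (\<lambda>h. g \<circ> h) ` stab X G F \<subseteq> T)"
    show "S \<inter> T \<subseteq> G \<and> (\<forall>g\<in>S \<inter> T. \<exists>F. finite F \<and> F \<subseteq> topspace X \<and> (\<lambda>h. g \<circ> h) ` stab X G F \<subseteq> S \<inter> T)"
    proof (intro conjI ballI)
      show "S \<inter> T \<subseteq> G" using S by blast
      fix g assume g: "g \<in> S \<inter> T"
      then obtain F1 where F1: "finite F1" "F1 \<subseteq> topspace X" "(\<lambda>h. g \<circ> h) ` stab X G F1 \<subseteq> S" using S by blast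
      obtain F2 where F2: "finite F2" "F2 \<subseteq> topspace X" "(\<lambda>h. g \<circ> h) ` stab X G F2 \<subseteq> T" using T g by blast
      have "stab X G (F1 \<union> F2) \<subseteq> stab X G F1" "stab X G (F1 \<union> F2) \<subseteq> stab X G F2"
        unfolding stab_def by auto
      then have "(\<lambda>h. g \<circ> h) ` stab X G (F1 \<union> F2) \<subseteq> S \<inter> T"
        using F1(3) F2(3) by (meson image_mono order_trans le_inf_iff)
      moreover have "finite (F1 \<union> F2)" "F1 \<union> F2 \<subseteq> topspace X" using F1 F2 by auto
      ultimately show "\<exists>F. finite F \<and> F \<subseteq> topspace X \<and> (\<lambda>h. g \<circ> h) ` stab X G F \<subseteq> S \<inter> T"
        by blast
    qed
  next
    fix K :: "('a \<Rightarrow> 'a) set set"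
    assume K: "\<forall>S\<in>K. S \<subseteq> G \<and> (\<forall>g\<in>S. \<exists>F. finite F \<and> F \<subseteq> topspace X \<and> (\<lambda>h. g \<circ> h) ` stab X G F \<subseteq> S)"
    show "\<Union>K \<subseteq> G \<and> (\<forall>g\<in>\<Union>K. \<exists>F. finite F \<and> F \<subseteq> topspace X \<and> (\<lambda>h. g \<circ> h) ` stab X G F \<subseteq> \<Union>K)"
    proof (intro conjI ballI)
      show "\<Union>K \<subseteq> G"
      proof (rule Union_least)
        fix S assume "S \<in> K"
        from bspec[OF K this] show "S \<subseteq> G" by (rule conjunct1)
      qed
      fix g assume "g \<in> \<Union>K"
      then obtain S where S: "S \<in> K" "g \<in> S" by (rule UnionE)
      from bspec[OF conjunct2[OF bspec[OF K S(1)]] S(2)] obtain F where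
        F: "finite F" "F \<subseteq> topspace X" "(\<lambda>h. g \<circ> h) ` stab X G F \<subseteq> S" by (elim exE conjE)
      have "S \<subseteq> \<Union>K" using S(1) by (rule Union_upper)
      then have "(\<lambda>h. g \<circ> h) ` stab X G F \<subseteq> \<Union>K" using F(3) by (rule order_trans[rotated])
      then show "\<exists>F. finite F \<and> F \<subseteq> topspace X \<and> (\<lambda>h. g \<circ> h) ` stab X G F \<subseteq> \<Union>K"
        using F(1,2) by (intro exI conjI)
    qed
  qed
  then show ?thesis unfolding tau_partial_def by (simp only: topology_inverse')
qed

theorem corollary1p2:
  fixes X :: "'a topology" and G :: "('a \<Rightarrow> 'a) set"
  assumes "homeo_group X G"
    and "acts_effectively X G"
    and "admissible X G (tau_p X G)"
  shows "(roelcke_precompact G (tau_partial X G) \<longrightarrow> roelcke_precompact G (tau_p X G)) \<and>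
         (\<not> roelcke_precompact G (tau_p X G) \<longrightarrow>
            (\<forall>T. admissible X G T \<longrightarrow> \<not> roelcke_precompact G T))"
proof (intro conjI impI allI)
  assume rp: "roelcke_precompact G (tau_partial X G)"
  show "roelcke_precompact G (tau_p X G)"
  proof (rule rp_mono[OF rp])
    fix U assume "openin (tau_p X G) U"
    then show "openin (tau_partial X G) U"
    proof (rule tau_p_open)
      fix x V assume x: "x \<in> topspace X" and V: "openin X V"
      show "openin (tau_partial X G) {f \<in> G. f x \<in> V}"
        unfolding openin_tau_partial[OF assms(1)]
      proof (intro conjI ballI)
        fix g assume g: "g \<in> {f \<in> G. f x \<in> V}"
        have "(\<lambda>h. g \<circ> h) ` stab X G {x} \<subseteq> {f \<in> G. f x \<in> V}"
        proof
          fix k assume "k \<in> (\<lambda>h. g \<circ> h) ` stab X G {x}"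
          then obtain h where h: "h \<in> G" "h x = x" "k = g \<circ> h" unfolding stab_def by blast
          have "g \<in> G" using g by blast
          have cl: "\<forall>f\<in>G. \<forall>g\<in>G. f \<circ> g \<in> G" using assms(1) unfolding homeo_group_def by (elim conjE)
          then have "k \<in> G" using h \<open>g \<in> G\<close> by simp
          moreover have "k x \<in> V" using h g by simp
          ultimately show "k \<in> {f \<in> G. f x \<in> V}" by blast
        qed
        then show "\<exists>F. finite F \<and> F \<subseteq> topspace X \<and> (\<lambda>h. g \<circ> h) ` stab X G F \<subseteq> {f \<in> G. f x \<in> V}"
          using x by (intro exI[of _ "{x}"]) simp
      qed blast
    qed
  qed
next
  fix T
  assume nrp: "\<not> roelcke_precompact G (tau_p X G)" and adm: "admissible X G T"
  show "\<not> roelcke_precompact G T"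
  proof
    assume rp: "roelcke_precompact G T"
    have "roelcke_precompact G (tau_p X G)"
    proof (rule rp_mono[OF rp])
      fix U assume "openin (tau_p X G) U"
      then show "openin T U"
      proof (rule tau_p_open)
        fix x V assume x: "x \<in> topspace X" and V: "openin X V"
        have top: "topspace T = G" using adm unfolding admissible_def group_topology_def by blast
        have ev: "continuous_map (prod_topology T X) X (\<lambda>(g, x). g x)"
          using adm unfolding admissible_def by blast
        have "continuous_map T (prod_topology T X) (\<lambda>g. (g, x))"
          using x by (simp add: continuous_map_pairwise o_def)
        then have "continuous_map T X (\<lambda>g. g x)"
        proof -
          have eq: "(\<lambda>g. g x) = (\<lambda>(g, x). g x) \<circ> (\<lambda>g. (g, x))" by (simp add: o_def)
          show ?thesis unfolding eq using continuous_map_compose[OF \<open>continuous_map T (prod_topology T X) (\<lambda>g. (g, x))\<close> ev] .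
        qed
        then have "openin T {g \<in> topspace T. g x \<in> V}"
          using V by (rule openin_continuous_map_preimage)
        then show "openin T {f \<in> G. f x \<in> V}" using top by simp
      qed
    qed
    with nrp show False by simp
  qed
qed

end
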